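(* Let $G=(V,E)$ be a connected graph, $\tau$ a set of types, $f:\tau\to\mathbb{Q}_{\ge1}$ a fitness function, and $\alpha\in\tau$. Let $\beta=\arg\max\{f(j): j\in\tau\setminus\{\alpha\}\}$ and $\tau'=\{\alpha,\beta\}$. Let $\Omega$ (resp. $\Omega'$) be the set of functions $V\to\tau$ (resp. $V\to\tau'$), and define $g:\Omega\to\Omega'$ by $g(S)(v)=\alpha$ if $S(v)=\alpha$ and $g(S)(v)=\beta$ otherwise. Then for every $M_0\in\Omega$, $\pi_\alpha(G,\tau,f,M_0)\ge\pi_\alpha(G,\tau',f,g(M_0))$ (where on the right $f$ is restricted to $\tau'$).
   Context: For $G=(V,E)$, $N(v)$ is the neighbourhood of $v$. For a state $S:V\to\tau$ and $v,w\in V$, $S|_{v\to w}$ equals $S$ except $w$ gets type $S(v)$. The Moran process $M(G,\tau,f,M_0)$ is the Markov chain on states $V\to\tau$ started at $M_0$ in which, given $M_t$, a vertex $v$ is chosen with probability $f(M_t(v))/\sum_{u\in V}f(M_t(u))$, then $w\in N(v)$ uniformly at random, and $M_{t+1}=M_t|_{v\to w}$. $\pi_j(G,\tau,f,M_0)$ is the probability that at some time every vertex has type $j$. *)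

theory Defs
  imports Complex_Main
begin

definition simple_graph :: "'a set \<Rightarrow> ('a \<times> 'a) set \<Rightarrow> bool" where
  "simple_graph V E \<longleftrightarrow> finite V \<and> E \<subseteq> V \<times> V \<and> sym E \<and> (\<forall>v. (v, v) \<notin> E)"

definition connected_graph :: "'a set \<Rightarrow> ('a \<times> 'a) set \<Rightarrow> bool" where
  "connected_graph V E \<longleftrightarrow> simple_graph V E \<and> V \<noteq> {} \<and> (\<forall>u\<in>V. \<forall>v\<in>V. (u, v) \<in> E\<^sup>*)"

definition nbhd :: "('a \<times> 'a) set \<Rightarrow> 'a \<Rightarrow> 'a set" where
  "nbhd E v = {w. (v, w) \<in> E}"

definition repl :: "('a \<Rightarrow> 'b) \<Rightarrow> 'a \<Rightarrow> 'a \<Rightarrow> ('a \<Rightarrow> 'b)" where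
  "repl S v w = S(w := S v)"

definition total_fitness :: "'a set \<Rightarrow> ('b \<Rightarrow> rat) \<Rightarrow> ('a \<Rightarrow> 'b) \<Rightarrow> real" where
  "total_fitness V f S = (\<Sum>u\<in>V. real_of_rat (f (S u)))"

definition moran_trans :: "'a set \<Rightarrow> ('a \<times> 'a) set \<Rightarrow> ('b \<Rightarrow> rat) \<Rightarrow>
    ('a \<Rightarrow> 'b) \<Rightarrow> ('a \<Rightarrow> 'b) \<Rightarrow> real" where
  "moran_trans V E f S S' =
     (\<Sum>v\<in>V. real_of_rat (f (S v)) / total_fitness V f S *
        (\<Sum>w\<in>nbhd E v. (if repl S v w = S' then 1 / real (card (nbhd E v)) else 0)))"

definition monochrome :: "'a set \<Rightarrow> 'b \<Rightarrow> ('a \<Rightarrow> 'b) \<Rightarrow> bool" where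
  "monochrome V j S \<longleftrightarrow> (\<forall>v\<in>V. S v = j)"

text \<open>hit_within V E f j n S: probability that the Moran process started in S has
  every vertex of type j at some time t \<le> n (first-step recursion; states
  reachable in one step from S are the S|_{v->w} with w a neighbour of v).\<close>
fun hit_within :: "'a set \<Rightarrow> ('a \<times> 'a) set \<Rightarrow> ('b \<Rightarrow> rat) \<Rightarrow> 'b \<Rightarrow> nat \<Rightarrow>
    ('a \<Rightarrow> 'b) \<Rightarrow> real" where
  "hit_within V E f j 0 S = (if monochrome V j S then 1 else 0)"
| "hit_within V E f j (Suc n) S =
     (if monochrome V j S then 1 else
        (\<Sum>v\<in>V. real_of_rat (f (S v)) / total_fitness V f S *
          (\<Sum>w\<in>nbhd E v. hit_within V E f j n (repl S v w) / real (card (nbhd E v)))))"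

text \<open>pi_j(G,tau,f,M0): probability that at some time all vertices have type j.
  The event is the increasing union over n of the events "by time n", so its
  probability is the supremum of hit_within. The type set tau only determines
  the state space (functions V -> tau), which is imposed via the hypothesis on M0.\<close>
definition fixation_prob :: "'a set \<Rightarrow> ('a \<times> 'a) set \<Rightarrow> 'b set \<Rightarrow> ('b \<Rightarrow> rat) \<Rightarrow>
    ('a \<Rightarrow> 'b) \<Rightarrow> 'b \<Rightarrow> real" where
  "fixation_prob V E \<tau> f M0 j = (SUP n. hit_within V E f j n M0)"

end

theory Submission imports Defs "HOL-Library.FuncSet"
begin

abbreviation ff :: "('b \<Rightarrow> rat) \<Rightarrow> 'b \<Rightarrow> real" where "ff f x \<equiv> real_of_rat (f x)"

definition Fx :: "'a set \<Rightarrow> ('a \<times> 'a) set \<Rightarrow> ('b \<Rightarrow> rat) \<Rightarrow> 'b \<Rightarrow> ('a \<Rightarrow> 'b) \<Rightarrow> real" where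
  "Fx V E f j S = (SUP n. hit_within V E f j n S)"

lemma hw_cong:
  "\<forall>u\<in>V. S u = S' u \<Longrightarrow> hit_within V E f j n S = hit_within V E f j n S'"
proof (induction n arbitrary: S S')
  case 0 then show ?case by (simp add: monochrome_def)
next
  case (Suc n)
  have m: "monochrome V j S = monochrome V j S'" using Suc.prems by (simp add: monochrome_def)
  have tf: "total_fitness V f S = total_fitness V f S'" using Suc.prems unfolding total_fitness_def
    by (intro sum.cong) auto
  have r: "\<And>v w. v\<in>V \<Longrightarrow> hit_within V E f j n (repl S v w) = hit_within V E f j n (repl S' v w)"
    by (rule Suc.IH) (use Suc.prems in \<open>auto simp: repl_def\<close>)
  show ?case unfolding hit_within.simps m tf using Suc.prems r by (auto intro!: sum.cong)
qed

lemma nbhd_sub: "E \<subseteq> V \<times> V \<Longrightarrow> nbhd E v \<subseteq> V"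
  by (auto simp: nbhd_def)

lemma nbhd_fin: "finite V \<Longrightarrow> E \<subseteq> V \<times> V \<Longrightarrow> finite (nbhd E v)"
  by (rule finite_subset[OF nbhd_sub])

lemma repl_valid: "\<forall>u\<in>V. S u \<in> \<sigma> \<Longrightarrow> v \<in> V \<Longrightarrow> \<forall>u\<in>V. repl S v w u \<in> \<sigma>"
  by (auto simp: repl_def)

lemma avg_le1:
  assumes "finite A" "\<forall>w\<in>A. g w \<le> (1::real)"
  shows "(\<Sum>w\<in>A. g w / real (card A)) \<le> 1"
proof -
  have "(\<Sum>w\<in>A. g w / real (card A)) \<le> (\<Sum>w\<in>A. 1 / real (card A))"
    using assms by (intro sum_mono divide_right_mono) auto
  also have "\<dots> \<le> 1" by simp
  finally show ?thesis .
qed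

lemma wavg_le1:
  assumes "finite V" "\<forall>v\<in>V. 0 \<le> (a v::real)" "0 < sum a V" "\<forall>v\<in>V. q v \<le> 1"
  shows "(\<Sum>v\<in>V. a v / sum a V * q v) \<le> 1"
proof -
  have "(\<Sum>v\<in>V. a v / sum a V * q v) \<le> (\<Sum>v\<in>V. a v / sum a V * 1)"
    using assms by (intro sum_mono mult_left_mono) auto
  also have "\<dots> = sum a V / sum a V" by (simp add: sum_divide_distrib[symmetric])
  also have "\<dots> = 1" using assms by simp
  finally show ?thesis .
qed

lemma tf_pos:
  assumes "finite V" "V \<noteq> {}" "\<forall>x\<in>\<sigma>. 1 \<le> f x" "\<forall>u\<in>V. S u \<in> \<sigma>"
  shows "0 < total_fitness V f S"
proof -
  have "\<forall>u\<in>V. 1 \<le> ff f (S u)" using assms by (metis of_rat_1 of_rat_less_eq)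
  then have "\<forall>u\<in>V. 0 < ff f (S u)" by (meson less_le_trans zero_less_one)
  then show ?thesis unfolding total_fitness_def using assms
    by (intro sum_pos) auto
qed

lemma ff_ge1: "\<forall>x\<in>\<sigma>. 1 \<le> f x \<Longrightarrow> x \<in> \<sigma> \<Longrightarrow> 1 \<le> ff f x"
  by (metis of_rat_1 of_rat_less_eq)

lemma ff_nonneg: "\<forall>x\<in>\<sigma>. 1 \<le> f x \<Longrightarrow> \<forall>u\<in>V. S u \<in> \<sigma> \<Longrightarrow> \<forall>v\<in>V. 0 \<le> ff f (S v)"
proof
  fix v assume a: "\<forall>x\<in>\<sigma>. 1 \<le> f x" "\<forall>u\<in>V. S u \<in> \<sigma>" and v: "v \<in> V"
  have "1 \<le> ff f (S v)" using ff_ge1[OF a(1)] a(2) v by blast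
  then show "0 \<le> ff f (S v)" by linarith
qed

lemma hw_bounds:
  assumes "finite V" "E \<subseteq> V \<times> V" "\<forall>x\<in>\<sigma>. 1 \<le> f x" "\<forall>u\<in>V. S u \<in> \<sigma>"
  shows "0 \<le> hit_within V E f j n S \<and> hit_within V E f j n S \<le> 1"
  using assms(4)
proof (induction n arbitrary: S)
  case 0 then show ?case by simp
next
  case (Suc n)
  show ?case
  proof (cases "monochrome V j S")
    case True then show ?thesis by simp
  next
    case False
    then have ne: "V \<noteq> {}" by (auto simp: monochrome_def)
    have W: "0 < total_fitness V f S" using tf_pos[OF assms(1) ne assms(3) Suc.prems] .
    have fv: "\<forall>v\<in>V. 0 \<le> ff f (S v)" using ff_nonneg[OF assms(3) Suc.prems] .
    have IH: "\<And>v w. v \<in> V \<Longrightarrow> 0 \<le> hit_within V E f j n (repl S v w) \<and> hit_within V E f j n (repl S v w) \<le> 1"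
      by (rule Suc.IH[OF repl_valid[OF Suc.prems]])
    have q1: "\<forall>v\<in>V. (\<Sum>w\<in>nbhd E v. hit_within V E f j n (repl S v w) / real (card (nbhd E v))) \<le> 1"
      using IH nbhd_fin[OF assms(1,2)] by (intro ballI avg_le1) auto
    have "(\<Sum>v\<in>V. ff f (S v) / total_fitness V f S * (\<Sum>w\<in>nbhd E v. hit_within V E f j n (repl S v w) / real (card (nbhd E v)))) \<le> 1"
      using wavg_le1[OF assms(1) fv _ q1] W unfolding total_fitness_def by simp
    moreover have "0 \<le> (\<Sum>v\<in>V. ff f (S v) / total_fitness V f S * (\<Sum>w\<in>nbhd E v. hit_within V E f j n (repl S v w) / real (card (nbhd E v))))"
      using IH fv W by (intro sum_nonneg mult_nonneg_nonneg divide_nonneg_nonneg) auto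
    ultimately show ?thesis using False by simp
  qed
qed

lemma hw_mono:
  assumes "finite V" "E \<subseteq> V \<times> V" "\<forall>x\<in>\<sigma>. 1 \<le> f x" "\<forall>u\<in>V. S u \<in> \<sigma>"
  shows "hit_within V E f j n S \<le> hit_within V E f j (Suc n) S"
  using assms(4)
proof (induction n arbitrary: S)
  case 0 then show ?case using hw_bounds[OF assms(1-3) 0, of j 1] by (cases "monochrome V j S") simp_all
next
  case (Suc n)
  show ?case
  proof (cases "monochrome V j S")
    case True then show ?thesis by simp
  next
    case False
    have fv: "\<forall>v\<in>V. 0 \<le> ff f (S v)" using ff_nonneg[OF assms(3) Suc.prems] .
    have W: "0 \<le> total_fitness V f S" unfolding total_fitness_def using fv by (simp add: sum_nonneg)
    have IH: "\<And>v w. v \<in> V \<Longrightarrow> hit_within V E f j n (repl S v w) \<le> hit_within V E f j (Suc n) (repl S v w)"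
      by (rule Suc.IH[OF repl_valid[OF Suc.prems]])
    show ?thesis using False
      apply (simp only: hit_within.simps if_False)
      using IH fv W by (intro sum_mono mult_left_mono divide_right_mono divide_nonneg_nonneg) auto
  qed
qed

lemma Fx_lim:
  assumes "finite V" "E \<subseteq> V \<times> V" "\<forall>x\<in>\<sigma>. 1 \<le> f x" "\<forall>u\<in>V. S u \<in> \<sigma>"
  shows "(\<lambda>n. hit_within V E f j n S) \<longlonglongrightarrow> Fx V E f j S"
  unfolding Fx_def
proof (rule LIMSEQ_incseq_SUP)
  show "bdd_above (range (\<lambda>n. hit_within V E f j n S))"
    using hw_bounds[OF assms] by (intro bdd_aboveI[where M=1]) auto
  show "incseq (\<lambda>n. hit_within V E f j n S)"
    using hw_mono[OF assms] by (intro incseq_SucI) auto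
qed

lemma Fx_bounds:
  assumes "finite V" "E \<subseteq> V \<times> V" "\<forall>x\<in>\<sigma>. 1 \<le> f x" "\<forall>u\<in>V. S u \<in> \<sigma>"
  shows "0 \<le> Fx V E f j S \<and> Fx V E f j S \<le> 1"
proof -
  note L = Fx_lim[OF assms, of j]
  have "0 \<le> Fx V E f j S" using hw_bounds[OF assms] by (intro LIMSEQ_le_const[OF L]) auto
  moreover have "Fx V E f j S \<le> 1" using hw_bounds[OF assms] by (intro LIMSEQ_le_const2[OF L]) auto
  ultimately show ?thesis by simp
qed

lemma Fx_mono1: "monochrome V j S \<Longrightarrow> Fx V E f j S = 1"
proof -
  assume m: "monochrome V j S"
  have "\<And>n. hit_within V E f j n S = 1" using m by (case_tac n) auto
  then show ?thesis unfolding Fx_def by simp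
qed

lemma Fx_cong: "\<forall>u\<in>V. S u = S' u \<Longrightarrow> Fx V E f j S = Fx V E f j S'"
  unfolding Fx_def using hw_cong by metis

lemma tendsto_divc: "(g \<longlongrightarrow> (a::real)) F \<Longrightarrow> ((\<lambda>x. g x / c) \<longlongrightarrow> a / c) F"
  by (simp add: divide_inverse tendsto_mult_right)

lemma Fx_harm:
  assumes "finite V" "E \<subseteq> V \<times> V" "\<forall>x\<in>\<sigma>. 1 \<le> f x" "\<forall>u\<in>V. S u \<in> \<sigma>" "\<not> monochrome V j S"
  shows "Fx V E f j S = (\<Sum>v\<in>V. ff f (S v) / total_fitness V f S *
            (\<Sum>w\<in>nbhd E v. Fx V E f j (repl S v w) / real (card (nbhd E v))))"
proof -
  have l1: "(\<lambda>n. hit_within V E f j (Suc n) S) \<longlonglongrightarrow> Fx V E f j S"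
    using LIMSEQ_Suc[OF Fx_lim[OF assms(1-4)]] .
  have eq: "(\<lambda>n. hit_within V E f j (Suc n) S) = (\<lambda>n. (\<Sum>v\<in>V. ff f (S v) / total_fitness V f S *
          (\<Sum>w\<in>nbhd E v. hit_within V E f j n (repl S v w) / real (card (nbhd E v)))))"
    using assms(5) by simp
  have l3: "(\<lambda>n. (\<Sum>v\<in>V. ff f (S v) / total_fitness V f S *
          (\<Sum>w\<in>nbhd E v. hit_within V E f j n (repl S v w) / real (card (nbhd E v)))))
      \<longlonglongrightarrow> (\<Sum>v\<in>V. ff f (S v) / total_fitness V f S *
            (\<Sum>w\<in>nbhd E v. Fx V E f j (repl S v w) / real (card (nbhd E v))))"
    apply (rule tendsto_sum)
    apply (rule tendsto_mult_left)
    apply (rule tendsto_sum)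
    apply (rule tendsto_divc)
    apply (rule Fx_lim[OF assms(1-3)])
    by (rule repl_valid[OF assms(4)])
  show ?thesis using LIMSEQ_unique[OF l1[unfolded eq] l3] .
qed

definition Dom :: "'a set \<Rightarrow> 'b set \<Rightarrow> 'b \<Rightarrow> ('a \<Rightarrow> 'b) \<Rightarrow> ('a \<Rightarrow> 'b) set" where
  "Dom V \<tau> \<alpha> T = {S \<in> PiE V (\<lambda>_. \<tau>). \<forall>v\<in>V. T v = \<alpha> \<longrightarrow> S v = \<alpha>}"

definition Kf :: "'a set \<Rightarrow> ('a \<times> 'a) set \<Rightarrow> ('b \<Rightarrow> rat) \<Rightarrow> 'b set \<Rightarrow> 'b \<Rightarrow> ('a \<Rightarrow> 'b) \<Rightarrow> real" where
  "Kf V E f \<tau> \<alpha> T = Min (Fx V E f \<alpha> ` Dom V \<tau> \<alpha> T)"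

lemma Dom_fin: "finite V \<Longrightarrow> finite \<tau> \<Longrightarrow> finite (Dom V \<tau> \<alpha> T)"
  unfolding Dom_def by (rule finite_subset[OF _ finite_PiE[of V "\<lambda>_. \<tau>"]]) auto

lemma Dom_const: "\<alpha> \<in> \<tau> \<Longrightarrow> (\<lambda>v\<in>V. \<alpha>) \<in> Dom V \<tau> \<alpha> T"
  unfolding Dom_def by auto

lemma Kf_le: "finite V \<Longrightarrow> finite \<tau> \<Longrightarrow> S \<in> Dom V \<tau> \<alpha> T \<Longrightarrow> Kf V E f \<tau> \<alpha> T \<le> Fx V E f \<alpha> S"
  unfolding Kf_def by (intro Min_le) (auto intro: Dom_fin)

lemma Kf_in: "finite V \<Longrightarrow> finite \<tau> \<Longrightarrow> \<alpha> \<in> \<tau> \<Longrightarrow> \<exists>S\<in>Dom V \<tau> \<alpha> T. Kf V E f \<tau> \<alpha> T = Fx V E f \<alpha> S"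
proof -
  assume a: "finite V" "finite \<tau>" "\<alpha> \<in> \<tau>"
  have "Kf V E f \<tau> \<alpha> T \<in> Fx V E f \<alpha> ` Dom V \<tau> \<alpha> T"
    unfolding Kf_def using a Dom_const[OF a(3)] by (intro Min_in) (auto intro: Dom_fin)
  then show ?thesis by auto
qed

lemma Kf_le1: "finite V \<Longrightarrow> finite \<tau> \<Longrightarrow> \<alpha> \<in> \<tau> \<Longrightarrow> Kf V E f \<tau> \<alpha> T \<le> 1"
proof -
  assume a: "finite V" "finite \<tau>" "\<alpha> \<in> \<tau>"
  have m: "monochrome V \<alpha> (\<lambda>v\<in>V. \<alpha>)" by (simp add: monochrome_def)
  have "Kf V E f \<tau> \<alpha> T \<le> Fx V E f \<alpha> (\<lambda>v\<in>V. \<alpha>)" using Kf_le[OF a(1,2) Dom_const[OF a(3)]] .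
  then show ?thesis using Fx_mono1[OF m] by simp
qed

lemma Dom_PiE_valid: "S \<in> Dom V \<tau> \<alpha> T \<Longrightarrow> \<forall>u\<in>V. S u \<in> \<tau>"
  unfolding Dom_def by auto

lemma repl_PiE: "S \<in> PiE V (\<lambda>_. \<tau>) \<Longrightarrow> v \<in> V \<Longrightarrow> w \<in> V \<Longrightarrow> repl S v w \<in> PiE V (\<lambda>_. \<tau>)"
  unfolding repl_def PiE_def extensional_def by auto

lemma Kf_mono1:
  assumes "finite V" "finite \<tau>" "\<alpha> \<in> \<tau>" "monochrome V \<alpha> T"
  shows "Kf V E f \<tau> \<alpha> T = 1"
proof -
  obtain S where S: "S \<in> Dom V \<tau> \<alpha> T" "Kf V E f \<tau> \<alpha> T = Fx V E f \<alpha> S" using Kf_in[OF assms(1-3)] by blast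
  have "monochrome V \<alpha> S" using S(1) assms(4) unfolding Dom_def monochrome_def by auto
  then show ?thesis using S(2) Fx_mono1[of V \<alpha> S E f] by simp
qed

lemma eqgen:
  assumes "finite V" "E \<subseteq> V \<times> V" "\<forall>v\<in>V. nbhd E v \<noteq> {}"
  shows "(\<Sum>v\<in>V. \<Sum>w\<in>nbhd E v. a v * (g v w - c) / real (card (nbhd E v)))
     = (\<Sum>v\<in>V. a v * (\<Sum>w\<in>nbhd E v. g v w / real (card (nbhd E v)))) - c * (\<Sum>v\<in>V. a v)"
proof -
  have "\<And>v. v \<in> V \<Longrightarrow> (\<Sum>w\<in>nbhd E v. a v * (g v w - c) / real (card (nbhd E v)))
      = a v * (\<Sum>w\<in>nbhd E v. g v w / real (card (nbhd E v))) - c * a v"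
  proof -
    fix v assume v: "v \<in> V"
    have fin: "finite (nbhd E v)" using nbhd_fin[OF assms(1,2)] .
    have cp: "real (card (nbhd E v)) > 0" using fin assms(3) v card_gt_0_iff by auto
    have "(\<Sum>w\<in>nbhd E v. a v * (g v w - c) / real (card (nbhd E v)))
        = (\<Sum>w\<in>nbhd E v. a v * (g v w / real (card (nbhd E v))) - a v * c / real (card (nbhd E v)))"
      by (intro sum.cong refl) (simp add: right_diff_distrib diff_divide_distrib)
    also have "\<dots> = a v * (\<Sum>w\<in>nbhd E v. g v w / real (card (nbhd E v))) - real (card (nbhd E v)) * (a v * c / real (card (nbhd E v)))"
      by (simp add: sum_subtractf sum_distrib_left)
    also have "\<dots> = a v * (\<Sum>w\<in>nbhd E v. g v w / real (card (nbhd E v))) - c * a v"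
      using cp by simp
    finally show "?thesis v" .
  qed
  then show ?thesis by (simp add: sum_subtractf sum_distrib_left)
qed

lemma super:
  assumes fV: "finite V" and EV: "E \<subseteq> V \<times> V" and ft: "finite \<tau>" and f1: "\<forall>x\<in>\<tau>. 1 \<le> f x"
    and a: "\<alpha> \<in> \<tau>" and b: "\<beta> \<in> \<tau>" and ba: "\<beta> \<noteq> \<alpha>" and fb: "\<forall>x\<in>\<tau> - {\<alpha>}. f x \<le> f \<beta>"
    and deg: "\<forall>v\<in>V. nbhd E v \<noteq> {}"
    and T: "\<forall>u\<in>V. T u \<in> {\<alpha>, \<beta>}" and nm: "\<not> monochrome V \<alpha> T"
  shows "(\<Sum>v\<in>V. ff f (T v) / total_fitness V f T *
            (\<Sum>w\<in>nbhd E v. Kf V E f \<tau> \<alpha> (repl T v w) / real (card (nbhd E v)))) \<le> Kf V E f \<tau> \<alpha> T"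
proof -
  let ?K = "Kf V E f \<tau> \<alpha>" and ?F = "Fx V E f \<alpha>"
  let ?d = "\<lambda>v. real (card (nbhd E v))"
  obtain S where S: "S \<in> Dom V \<tau> \<alpha> T" "?K T = ?F S" using Kf_in[OF fV ft a] by blast
  define c where "c = ?K T"
  have ne: "V \<noteq> {}" using nm by (auto simp: monochrome_def)
  have Sv: "\<forall>u\<in>V. S u \<in> \<tau>" using Dom_PiE_valid[OF S(1)] .
  have f1': "\<forall>x\<in>{\<alpha>,\<beta>}. 1 \<le> f x" using f1 a b by auto
  have Tv: "\<forall>u\<in>V. T u \<in> \<tau>" using T a b by auto
  have W': "0 < total_fitness V f T" using tf_pos[OF fV ne f1' T] .
  have W: "0 < total_fitness V f S" using tf_pos[OF fV ne f1 Sv] .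
  have nbV: "\<And>v w. w \<in> nbhd E v \<Longrightarrow> w \<in> V" using nbhd_sub[OF EV] by auto
  have fS0: "\<forall>v\<in>V. 0 \<le> ff f (S v)" using ff_nonneg[OF f1 Sv] .
  have fT0: "\<forall>v\<in>V. 0 \<le> ff f (T v)" using ff_nonneg[OF f1 Tv] .
  have K1: "\<And>T'. ?K T' \<le> 1" using Kf_le1[OF fV ft a] .
  show ?thesis
  proof (cases "monochrome V \<alpha> S")
    case True
    have "(\<Sum>v\<in>V. ff f (T v) / total_fitness V f T *
            (\<Sum>w\<in>nbhd E v. ?K (repl T v w) / ?d v)) \<le> 1"
    proof -
      have q: "\<forall>v\<in>V. (\<Sum>w\<in>nbhd E v. ?K (repl T v w) / ?d v) \<le> 1"
        using K1 nbhd_fin[OF fV EV] by (intro ballI avg_le1) auto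
      show ?thesis using wavg_le1[OF fV fT0 _ q] W' unfolding total_fitness_def by simp
    qed
    also have "1 = ?K T" using S Fx_mono1[OF True] by simp
    finally show ?thesis .
  next
    case False
    have harm: "?F S = (\<Sum>v\<in>V. ff f (S v) / total_fitness V f S * (\<Sum>w\<in>nbhd E v. ?F (repl S v w) / ?d v))"
      using Fx_harm[OF fV EV f1 Sv False] .
    have harm2: "(\<Sum>v\<in>V. ff f (S v) * (\<Sum>w\<in>nbhd E v. ?F (repl S v w) / ?d v)) = c * total_fitness V f S"
    proof -
      have "(\<Sum>v\<in>V. ff f (S v) / total_fitness V f S * (\<Sum>w\<in>nbhd E v. ?F (repl S v w) / ?d v))
          = (\<Sum>v\<in>V. ff f (S v) * (\<Sum>w\<in>nbhd E v. ?F (repl S v w) / ?d v)) / total_fitness V f S"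
        by (simp add: sum_divide_distrib)
      then show ?thesis using harm W S(2) c_def by (simp add: field_simps)
    qed
    have SD: "S \<in> PiE V (\<lambda>_. \<tau>)" using S(1) unfolding Dom_def by auto
    have ST: "\<forall>u\<in>V. T u = \<alpha> \<longrightarrow> S u = \<alpha>" using S(1) unfolding Dom_def by auto
    have trm: "ff f (T v) * (?K (repl T v w) - c) \<le> ff f (S v) * (?F (repl S v w) - c)"
      if v: "v \<in> V" and w: "w \<in> nbhd E v" for v w
    proof -
      have wV: "w \<in> V" using nbV w .
      have SwP: "repl S v w \<in> PiE V (\<lambda>_. \<tau>)" using repl_PiE[OF SD v wV] .
      show ?thesis
      proof (cases "T v = \<alpha>")
        case True
        then have "S v = \<alpha>" using ST v by auto
        then have "repl S v w \<in> Dom V \<tau> \<alpha> (repl T v w)" using SwP ST True unfolding Dom_def repl_def by auto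
        then have "?K (repl T v w) \<le> ?F (repl S v w)" using Kf_le[OF fV ft] by blast
        then have "ff f (T v) * (?K (repl T v w) - c) \<le> ff f (T v) * (?F (repl S v w) - c)"
          using fT0 v by (intro mult_left_mono) auto
        then show ?thesis using \<open>S v = \<alpha>\<close> True by simp
      next
        case Tb: False
        have SinT: "S \<in> Dom V \<tau> \<alpha> (repl T v w)" using SD ST Tb unfolding Dom_def repl_def by auto
        then have Kc: "?K (repl T v w) \<le> c" using Kf_le[OF fV ft] S(2) c_def by metis
        show ?thesis
        proof (cases "S v = \<alpha>")
          case True
          have "repl S v w \<in> Dom V \<tau> \<alpha> T" using SwP ST True unfolding Dom_def repl_def by auto
          then have "c \<le> ?F (repl S v w)" using Kf_le[OF fV ft] c_def by blast
          then have "0 \<le> ff f (S v) * (?F (repl S v w) - c)" using fS0 v by simp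
          moreover have "ff f (T v) * (?K (repl T v w) - c) \<le> 0" using Kc fT0 v
            by (simp add: mult_nonneg_nonpos)
          ultimately show ?thesis by linarith
        next
          case Sa: False
          have Tb': "T v = \<beta>" using T Tb v by auto
          have "repl S v w \<in> Dom V \<tau> \<alpha> (repl T v w)" using SwP ST Sa Tb unfolding Dom_def repl_def by auto
          then have KF: "?K (repl T v w) \<le> ?F (repl S v w)" using Kf_le[OF fV ft] by blast
          have "f (S v) \<le> f \<beta>" using fb Sv v Sa by auto
          then have fle: "ff f (S v) \<le> ff f (T v)" using Tb' by (simp add: of_rat_less_eq)
          have "ff f (T v) * (?K (repl T v w) - c) \<le> ff f (S v) * (?K (repl T v w) - c)"
            using fle Kc by (intro mult_right_mono_neg) auto
          also have "\<dots> \<le> ff f (S v) * (?F (repl S v w) - c)" using KF fS0 v by (intro mult_left_mono) auto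
          finally show ?thesis .
        qed
      qed
    qed
    have A: "(\<Sum>v\<in>V. \<Sum>w\<in>nbhd E v. ff f (T v) * (?K (repl T v w) - c) / ?d v)
        \<le> (\<Sum>v\<in>V. \<Sum>w\<in>nbhd E v. ff f (S v) * (?F (repl S v w) - c) / ?d v)"
      using trm by (intro sum_mono divide_right_mono) auto
    have B: "(\<Sum>v\<in>V. ff f (T v) * (\<Sum>w\<in>nbhd E v. ?K (repl T v w) / ?d v)) - c * total_fitness V f T \<le> 0"
    proof -
      have L: "(\<Sum>v\<in>V. \<Sum>w\<in>nbhd E v. ff f (T v) * (?K (repl T v w) - c) / ?d v)
         = (\<Sum>v\<in>V. ff f (T v) * (\<Sum>w\<in>nbhd E v. ?K (repl T v w) / ?d v)) - c * total_fitness V f T"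
        unfolding total_fitness_def by (rule eqgen[OF fV EV deg])
      have R: "(\<Sum>v\<in>V. \<Sum>w\<in>nbhd E v. ff f (S v) * (?F (repl S v w) - c) / ?d v)
         = (\<Sum>v\<in>V. ff f (S v) * (\<Sum>w\<in>nbhd E v. ?F (repl S v w) / ?d v)) - c * total_fitness V f S"
        unfolding total_fitness_def by (rule eqgen[OF fV EV deg])
      show ?thesis using A L R harm2 by linarith
    qed
    have "(\<Sum>v\<in>V. ff f (T v) / total_fitness V f T * (\<Sum>w\<in>nbhd E v. ?K (repl T v w) / ?d v))
        = (\<Sum>v\<in>V. ff f (T v) * (\<Sum>w\<in>nbhd E v. ?K (repl T v w) / ?d v)) / total_fitness V f T"
      by (simp add: sum_divide_distrib)
    also have "\<dots> \<le> c" using B W' by (simp add: divide_le_eq mult.commute)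
    finally show ?thesis using c_def by simp
  qed
qed

lemma Kf_nonneg:
  assumes "finite V" "E \<subseteq> V \<times> V" "finite \<tau>" "\<forall>x\<in>\<tau>. 1 \<le> f x" "\<alpha> \<in> \<tau>"
  shows "0 \<le> Kf V E f \<tau> \<alpha> T"
proof -
  obtain S where S: "S \<in> Dom V \<tau> \<alpha> T" "Kf V E f \<tau> \<alpha> T = Fx V E f \<alpha> S"
    using Kf_in[OF assms(1,3,5)] by blast
  show ?thesis using S(2) Fx_bounds[OF assms(1,2,4) Dom_PiE_valid[OF S(1)]] by simp
qed

lemma red_le_Kf:
  assumes fV: "finite V" and EV: "E \<subseteq> V \<times> V" and ft: "finite \<tau>" and f1: "\<forall>x\<in>\<tau>. 1 \<le> f x"
    and a: "\<alpha> \<in> \<tau>" and b: "\<beta> \<in> \<tau>" and ba: "\<beta> \<noteq> \<alpha>" and fb: "\<forall>x\<in>\<tau> - {\<alpha>}. f x \<le> f \<beta>"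
    and deg: "\<forall>v\<in>V. nbhd E v \<noteq> {}"
  shows "\<forall>u\<in>V. T u \<in> {\<alpha>, \<beta>} \<Longrightarrow> hit_within V E f \<alpha> n T \<le> Kf V E f \<tau> \<alpha> T"
proof (induction n arbitrary: T)
  case 0
  show ?case
  proof (cases "monochrome V \<alpha> T")
    case True then show ?thesis using Kf_mono1[OF fV ft a True] by simp
  next
    case False then show ?thesis using Kf_nonneg[OF fV EV ft f1 a] by simp
  qed
next
  case (Suc n)
  show ?case
  proof (cases "monochrome V \<alpha> T")
    case True then show ?thesis using Kf_mono1[OF fV ft a True] by simp
  next
    case False
    have f1': "\<forall>x\<in>{\<alpha>,\<beta>}. 1 \<le> f x" using f1 a b by auto
    have fv: "\<forall>v\<in>V. 0 \<le> ff f (T v)" using ff_nonneg[OF f1' Suc.prems] .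
    have W: "0 \<le> total_fitness V f T" unfolding total_fitness_def using fv by (simp add: sum_nonneg)
    have IH: "\<And>v w. v \<in> V \<Longrightarrow> hit_within V E f \<alpha> n (repl T v w) \<le> Kf V E f \<tau> \<alpha> (repl T v w)"
      by (rule Suc.IH[OF repl_valid[OF Suc.prems]])
    have "hit_within V E f \<alpha> (Suc n) T = (\<Sum>v\<in>V. ff f (T v) / total_fitness V f T *
            (\<Sum>w\<in>nbhd E v. hit_within V E f \<alpha> n (repl T v w) / real (card (nbhd E v))))"
      using False by simp
    also have "\<dots> \<le> (\<Sum>v\<in>V. ff f (T v) / total_fitness V f T *
            (\<Sum>w\<in>nbhd E v. Kf V E f \<tau> \<alpha> (repl T v w) / real (card (nbhd E v))))"
      using IH fv W by (intro sum_mono mult_left_mono divide_right_mono divide_nonneg_nonneg) auto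
    also have "\<dots> \<le> Kf V E f \<tau> \<alpha> T"
      by (rule super[OF fV EV ft f1 a b ba fb deg Suc.prems False])
    finally show ?thesis .
  qed
qed

theorem corollary7:
  fixes V :: "'a set" and E :: "('a \<times> 'a) set" and \<tau> :: "'b set"
    and f :: "'b \<Rightarrow> rat" and \<alpha> \<beta> :: 'b and M0 :: "'a \<Rightarrow> 'b"
  assumes "connected_graph V E"
    and "finite \<tau>"
    and "\<forall>j\<in>\<tau>. 1 \<le> f j"
    and "\<alpha> \<in> \<tau>" and "\<beta> \<in> \<tau>" and "\<beta> \<noteq> \<alpha>"
    and "\<forall>j\<in>\<tau> - {\<alpha>}. f j \<le> f \<beta>"
    and "\<forall>v\<in>V. M0 v \<in> \<tau>"
  shows "fixation_prob V E \<tau> f M0 \<alpha>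
           \<ge> fixation_prob V E {\<alpha>, \<beta>} f (\<lambda>v. if M0 v = \<alpha> then \<alpha> else \<beta>) \<alpha>"
proof -
  have fV: "finite V" and EV: "E \<subseteq> V \<times> V" and irr: "\<forall>v. (v, v) \<notin> E" and ne: "V \<noteq> {}"
    and conn: "\<forall>u\<in>V. \<forall>v\<in>V. (u, v) \<in> E\<^sup>*"
    using assms(1) unfolding connected_graph_def simple_graph_def by auto
  define T0 where "T0 = (\<lambda>v. if M0 v = \<alpha> then \<alpha> else \<beta>)"
  have T0v: "\<forall>u\<in>V. T0 u \<in> {\<alpha>, \<beta>}" unfolding T0_def by auto
  have F0: "0 \<le> Fx V E f \<alpha> M0" using Fx_bounds[OF fV EV assms(3) assms(8)] by simp
  have key: "\<And>n. hit_within V E f \<alpha> n T0 \<le> Fx V E f \<alpha> M0"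
  proof -
    fix n
    show "hit_within V E f \<alpha> n T0 \<le> Fx V E f \<alpha> M0"
    proof (cases "\<exists>x. V = {x}")
      case True
      then obtain x where x: "V = {x}" by blast
      show ?thesis
      proof (cases "M0 x = \<alpha>")
        case True
        have m1: "monochrome V \<alpha> M0" using True x by (simp add: monochrome_def)
        have m2: "monochrome V \<alpha> T0" using True x by (simp add: monochrome_def T0_def)
        have "hit_within V E f \<alpha> n T0 = 1" using m2 by (cases n) auto
        then show ?thesis using Fx_mono1[OF m1] by simp
      next
        case False
        have m2: "\<not> monochrome V \<alpha> T0" using False x assms(6) by (simp add: monochrome_def T0_def)
        have nb: "nbhd E x = {}" using EV irr x unfolding nbhd_def by auto
        have "hit_within V E f \<alpha> n T0 = 0" using m2 nb x by (cases n) auto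
        then show ?thesis using F0 by simp
      qed
    next
      case False
      have deg: "\<forall>v\<in>V. nbhd E v \<noteq> {}"
      proof
        fix v assume v: "v \<in> V"
        obtain u where u: "u \<in> V" "u \<noteq> v" using False v by blast
        have "(v, u) \<in> E\<^sup>*" using conn u v by blast
        then show "nbhd E v \<noteq> {}"
        proof (cases rule: converse_rtranclE)
          case base then show ?thesis using u by simp
        next
          case (step y) then show ?thesis unfolding nbhd_def by auto
        qed
      qed
      have "hit_within V E f \<alpha> n T0 \<le> Kf V E f \<tau> \<alpha> T0"
        by (rule red_le_Kf[OF fV EV assms(2,3,4,5,6,7) deg T0v])
      also have "\<dots> \<le> Fx V E f \<alpha> (restrict M0 V)"
        by (rule Kf_le[OF fV assms(2)]) (use assms(6,8) in \<open>auto simp: Dom_def T0_def\<close>)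
      also have "\<dots> = Fx V E f \<alpha> M0" by (rule Fx_cong) simp
      finally show ?thesis .
    qed
  qed
  have "fixation_prob V E {\<alpha>, \<beta>} f T0 \<alpha> \<le> fixation_prob V E \<tau> f M0 \<alpha>"
    unfolding fixation_prob_def Fx_def[symmetric]
    unfolding Fx_def by (rule cSUP_least) (use key in \<open>simp_all add: Fx_def\<close>)
  then show ?thesis unfolding T0_def by simp
qed

end
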